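(* Let $V$ be a set and let $(\mathcal{H}_\ell)_{\ell\in\mathbb{Z}}$ be a hypergraph chain over $V$ with Helly Number $h$ and Colorful Helly Number $k\ge h$. Then there exists a function $\beta:(0,1)\to[0,1)$ with $\lim_{\alpha\to1}\beta(\alpha)=1$ such that for every $\ell\in\mathbb{Z}$, every finite set $S\subset V$ and every $\alpha\in(0,1)$, if $\left|\mathcal{H}_\ell\cap\binom{S}{h}\right|\ge\alpha\binom{|S|}{h}$, then there exists $S'\subset S$ with $|S'|\ge\beta(\alpha)|S|$ and $S'\in\mathcal{H}_{\ell+3}$.
   Context: A hypergraph on a base set $V$ is a family $\mathcal{H}\subset 2^V$; it is downwards closed if $H\in\mathcal{H}$ and $G\subset H$ imply $G\in\mathcal{H}$. A hypergraph chain over $V$ is a sequence $(\mathcal{H}_\ell)_{\ell\in\mathbb{Z}}$ of downwards closed hypergraphs on $V$ with $\mathcal{H}_\ell\subset\mathcal{H}_{\ell+1}$ for all $\ell$. It has Helly Number $h$ if for every $\ell\in\mathbb{Z}$ and every $S\subseteq V$, $\binom{S}{h}\subset\mathcal{H}_\ell$ implies $S\in\mathcal{H}_{\ell+1}$ (where $\binom{S}{h}$ is the set of $h$-element subsets of $S$). For $S_1,\dots,S_k\subset V$, a set $F\subset V$ is a colorful selection if there is a surjective map $\phi:\{1,\dots,k\}\to F$ with $\phi(i)\in S_i$ for all $i$; the set of these is $S_1\otimes\dots\otimes S_k$. The chain has Colorful Helly Number $k$ if whenever $S_1,\dots,S_k$ are finite subsets of $V$ and $\ell\in\mathbb{Z}$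 with $S_1\otimes\dots\otimes S_k\subset\mathcal{H}_\ell$, some $S_j\in\mathcal{H}_{\ell+1}$. *)

theory Defs
  imports Complex_Main
begin

definition hypergraph_on :: "'a set \<Rightarrow> 'a set set \<Rightarrow> bool" where
  "hypergraph_on V H \<longleftrightarrow> H \<subseteq> Pow V"

definition downwards_closed :: "'a set set \<Rightarrow> bool" where
  "downwards_closed H \<longleftrightarrow> (\<forall>A B. A \<in> H \<longrightarrow> B \<subseteq> A \<longrightarrow> B \<in> H)"

definition subsets_of_size :: "'a set \<Rightarrow> nat \<Rightarrow> 'a set set" where
  "subsets_of_size S h = {T. T \<subseteq> S \<and> card T = h \<and> finite T}"

definition hypergraph_chain :: "'a set \<Rightarrow> (int \<Rightarrow> 'a set set) \<Rightarrow> bool" where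
  "hypergraph_chain V H \<longleftrightarrow>
     (\<forall>l. hypergraph_on V (H l) \<and> downwards_closed (H l) \<and> H l \<subseteq> H (l + 1))"

definition helly_number :: "'a set \<Rightarrow> (int \<Rightarrow> 'a set set) \<Rightarrow> nat \<Rightarrow> bool" where
  "helly_number V H h \<longleftrightarrow>
     (\<forall>l S. S \<subseteq> V \<longrightarrow> subsets_of_size S h \<subseteq> H l \<longrightarrow> S \<in> H (l + 1))"

definition colorful_selections :: "nat \<Rightarrow> (nat \<Rightarrow> 'a set) \<Rightarrow> 'a set set" where
  "colorful_selections k S =
     {F. \<exists>phi. phi ` {1..k} = F \<and> (\<forall>i\<in>{1..k}. phi i \<in> S i)}"

definition colorful_helly_number :: "'a set \<Rightarrow> (int \<Rightarrow> 'a set set) \<Rightarrow> nat \<Rightarrow> bool" where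
  "colorful_helly_number V H k \<longleftrightarrow>
     (\<forall>l S. (\<forall>i\<in>{1..k}. finite (S i) \<and> S i \<subseteq> V) \<longrightarrow>
            colorful_selections k S \<subseteq> H l \<longrightarrow> (\<exists>j\<in>{1..k}. S j \<in> H (l + 1)))"

end

theory Submission
  imports Defs
begin

definition pdisj :: "'a set set \<Rightarrow> bool" where
  "pdisj D \<longleftrightarrow> (\<forall>A\<in>D. \<forall>B\<in>D. A \<noteq> B \<longrightarrow> A \<inter> B = {})"

lemma rainbow:
  assumes hel: "helly_number V H h" and col: "colorful_helly_number V H k"
    and pd: "pdisj D" and fD: "finite D" and XD: "X \<subseteq> D" and cX: "card X = k"
    and Dp: "\<forall>T\<in>D. finite T \<and> T \<subseteq> V \<and> T \<notin> H (l + 2)"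
  shows "\<exists>G. G \<subseteq> \<Union>X \<and> card G = h \<and> finite G \<and> G \<notin> H l \<and> (\<forall>T\<in>X. \<forall>x\<in>G. \<forall>y\<in>G. x \<in> T \<longrightarrow> y \<in> T \<longrightarrow> x = y)"
proof -
  have fX: "finite X" using fD XD finite_subset by blast
  obtain e where e: "bij_betw e {1..k} X"
    using finite_same_card_bij[of "{1..k}" X] fX cX by auto
  have eD: "e i \<in> D" if "i \<in> {1..k}" for i using e XD that bij_betwE by blast
  have "\<not> colorful_selections k e \<subseteq> H (l+1)"
  proof
    assume "colorful_selections k e \<subseteq> H (l+1)"
    moreover have "\<forall>i\<in>{1..k}. finite (e i) \<and> e i \<subseteq> V" using eD Dp by blast
    ultimately obtain j where "j \<in> {1..k}" "e j \<in> H (l+1+1)"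
      using col unfolding colorful_helly_number_def by blast
    then show False using eD Dp by (simp add: add.assoc)
  qed
  then obtain F where F: "F \<in> colorful_selections k e" "F \<notin> H (l+1)" by blast
  then obtain phi where phi: "phi ` {1..k} = F" "\<forall>i\<in>{1..k}. phi i \<in> e i"
    unfolding colorful_selections_def by blast
  have FV: "F \<subseteq> V" using phi eD Dp by blast
  have "\<not> subsets_of_size F h \<subseteq> H l"
    using hel FV F(2) unfolding helly_number_def by blast
  then obtain G where G: "G \<subseteq> F" "card G = h" "finite G" "G \<notin> H l"
    unfolding subsets_of_size_def by blast
  have "G \<subseteq> \<Union>X" using G(1) phi e bij_betwE by blast
  moreover have "x = y" if tx: "T \<in> X" "x \<in> G" "y \<in> G" "x \<in> T" "y \<in> T" for T x y
  proof -
    obtain i j where ij: "i \<in> {1..k}" "j \<in> {1..k}" "x = phi i" "y = phi j"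
      using tx G(1) phi(1) by blast
    have "e i = T" using pd eD[OF ij(1)] XD tx phi(2) ij unfolding pdisj_def by blast
    moreover have "e j = T" using pd eD[OF ij(2)] XD tx phi(2) ij unfolding pdisj_def by blast
    ultimately have "i = j" using e ij unfolding bij_betw_def inj_on_def by metis
    then show "x = y" using ij by simp
  qed
  ultimately show ?thesis using G by blast
qed

lemma supersets_card:
  assumes fD: "finite D" and JD: "J \<subseteq> D" and cJ: "card J = h"
  shows "card {X. X \<subseteq> D \<and> card X = k \<and> J \<subseteq> X} \<le> (card D - h choose (k - h))"
proof -
  have fJ: "finite J" using fD JD finite_subset by blast
  have "inj_on (\<lambda>X. X - J) {X. X \<subseteq> D \<and> card X = k \<and> J \<subseteq> X}"
    unfolding inj_on_def by (metis (mono_tags, lifting) Diff_partition mem_Collect_eq)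
  moreover have "(\<lambda>X. X - J) ` {X. X \<subseteq> D \<and> card X = k \<and> J \<subseteq> X} \<subseteq> {Y. Y \<subseteq> D - J \<and> card Y = k - h}"
  proof
    fix Y assume "Y \<in> (\<lambda>X. X - J) ` {X. X \<subseteq> D \<and> card X = k \<and> J \<subseteq> X}"
    then obtain X where X: "X \<subseteq> D" "J \<subseteq> X" "k = card X" "Y = X - J" by blast
    have "finite X" using X fD finite_subset by blast
    then have "card (X - J) = k - h" using card_Diff_subset[OF fJ X(2)] X cJ by simp
    then show "Y \<in> {Y. Y \<subseteq> D - J \<and> card Y = k - h}" using X by blast
  qed
  moreover have "finite {Y. Y \<subseteq> D - J \<and> card Y = k - h}" using fD by auto
  ultimately have "card {X. X \<subseteq> D \<and> card X = k \<and> J \<subseteq> X} \<le> card {Y. Y \<subseteq> D - J \<and> card Y = k - h}"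
    using card_inj_on_le by blast
  also have "\<dots> = (card (D - J) choose (k - h))" using n_subsets fD by blast
  also have "card (D - J) = card D - h" using card_Diff_subset[OF fJ JD] cJ by simp
  finally show ?thesis .
qed

lemma count_bad:
  assumes hel: "helly_number V H h" and col: "colorful_helly_number V H k"
    and pd: "pdisj D" and fD: "finite D"
    and Dp: "\<forall>T\<in>D. finite T \<and> T \<subseteq> V \<and> T \<notin> H (l + 2) \<and> card T = h"
  shows "(card D choose k) \<le> card {G. G \<subseteq> \<Union>D \<and> card G = h \<and> finite G \<and> G \<notin> H l} * (card D - h choose (k - h))"
proof -
  define Ks where "Ks = {X. X \<subseteq> D \<and> card X = k}"
  define Bad0 where "Bad0 = {G. G \<subseteq> \<Union>D \<and> card G = h \<and> finite G \<and> G \<notin> H l}"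
  define P where "P = (\<lambda>X G. G \<subseteq> \<Union>X \<and> card G = h \<and> finite G \<and> G \<notin> H l \<and> (\<forall>T\<in>X. \<forall>x\<in>G. \<forall>y\<in>G. x \<in> T \<longrightarrow> y \<in> T \<longrightarrow> x = y))"
  have "\<forall>X\<in>Ks. \<exists>G. P X G"
    using rainbow[OF hel col pd fD _ _ ] Dp unfolding Ks_def P_def by blast
  then obtain g where g: "\<And>X. X \<in> Ks \<Longrightarrow> P X (g X)" by metis
  define t where "t = (\<lambda>x. THE T. T \<in> D \<and> x \<in> T)"
  have tT: "t x = T" if "T \<in> D" "x \<in> T" for x T
    unfolding t_def using pd that unfolding pdisj_def by (rule_tac the_equality) blast+
  define Q where "Q = (card D - h choose (k - h))"
  have fib: "card {X\<in>Ks. g X = G} \<le> Q" if GK: "G \<in> g ` Ks" for G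
  proof -
    obtain X0 where X0: "X0 \<in> Ks" "G = g X0" using GK by blast
    have PX0: "P X0 G" using g X0 by blast
    have X0D: "X0 \<subseteq> D" using X0 Ks_def by blast
    have tG: "t ` G \<subseteq> X0"
    proof
      fix T assume "T \<in> t ` G"
      then obtain x where x: "x \<in> G" "T = t x" by blast
      then obtain T' where "T' \<in> X0" "x \<in> T'" using PX0 unfolding P_def by blast
      then show "T \<in> X0" using x tT X0D by auto
    qed
    have "inj_on t G"
    proof (rule inj_onI)
      fix x y assume xy: "x \<in> G" "y \<in> G" "t x = t y"
      obtain T where T: "T \<in> X0" "x \<in> T" using xy PX0 unfolding P_def by blast
      obtain T' where T': "T' \<in> X0" "y \<in> T'" using xy PX0 unfolding P_def by blast
      have "T = t x" using tT T X0D by blast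
      moreover have "T' = t y" using tT T' X0D by blast
      ultimately have "T = T'" using xy(3) by simp
      then show "x = y" using PX0 T T' xy unfolding P_def by blast
    qed
    then have cJ: "card (t ` G) = h" using PX0 card_image unfolding P_def by metis
    have "{X\<in>Ks. g X = G} \<subseteq> {X. X \<subseteq> D \<and> card X = k \<and> t ` G \<subseteq> X}"
    proof
      fix X assume "X \<in> {X\<in>Ks. g X = G}"
      then have X: "X \<in> Ks" "G = g X" by auto
      have PX: "P X G" using g X by blast
      have XD: "X \<subseteq> D" using X Ks_def by blast
      have "t ` G \<subseteq> X"
      proof
        fix T assume "T \<in> t ` G"
        then obtain x where x: "x \<in> G" "T = t x" by blast
        then obtain T' where "T' \<in> X" "x \<in> T'" using PX unfolding P_def by blast
        then show "T \<in> X" using x tT XD by auto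
      qed
      then show "X \<in> {X. X \<subseteq> D \<and> card X = k \<and> t ` G \<subseteq> X}" using X Ks_def by blast
    qed
    then have "card {X\<in>Ks. g X = G} \<le> card {X. X \<subseteq> D \<and> card X = k \<and> t ` G \<subseteq> X}"
      using fD by (intro card_mono) auto
    also have "\<dots> \<le> Q" unfolding Q_def using supersets_card[OF fD _ cJ] tG X0D by blast
    finally show ?thesis .
  qed
  have fKs: "finite Ks" using fD unfolding Ks_def by auto
  have eqK: "Ks = (\<Union>G\<in>g ` Ks. {X\<in>Ks. g X = G})" by blast
  have "card (\<Union>G\<in>g ` Ks. {X\<in>Ks. g X = G}) \<le> (\<Sum>G\<in>g ` Ks. card {X\<in>Ks. g X = G})"
    by (rule card_UN_le) (simp add: fKs)
  then have "card Ks \<le> (\<Sum>G\<in>g ` Ks. card {X\<in>Ks. g X = G})" using eqK by simp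
  also have "\<dots> \<le> (\<Sum>G\<in>g ` Ks. Q)" by (rule sum_mono) (rule fib)
  also have "\<dots> = card (g ` Ks) * Q" by simp
  also have "card (g ` Ks) \<le> card Bad0"
  proof (rule card_mono)
    have "Bad0 \<subseteq> Pow (\<Union>D)" unfolding Bad0_def by blast
    moreover have "finite (\<Union>D)" using fD Dp by blast
    ultimately show "finite Bad0" using finite_subset by blast
    show "g ` Ks \<subseteq> Bad0"
    proof
      fix G assume "G \<in> g ` Ks"
      then obtain X where X: "X \<in> Ks" "G = g X" by blast
      then have "P X G" using g by blast
      moreover have "\<Union>X \<subseteq> \<Union>D" using X unfolding Ks_def by blast
      ultimately show "G \<in> Bad0" unfolding P_def Bad0_def by blast
    qed
  qed
  finally have "card Ks \<le> card Bad0 * Q" by (simp add: mult_right_mono)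
  moreover have "card Ks = card D choose k" unfolding Ks_def using n_subsets fD by blast
  ultimately show ?thesis unfolding Bad0_def Q_def by simp
qed

lemma arith_main:
  fixes n m h k K :: nat and eps r :: real
  assumes h1: "1 \<le> h" and hk: "h \<le> k" and K1: "1 \<le> K" and e0: "0 < eps"
    and r: "r = root h eps"
    and small: "1 \<le> m \<Longrightarrow> m < k \<Longrightarrow> 1 \<le> eps * real n ^ h"
    and big: "k \<le> m \<Longrightarrow> real (m choose h) \<le> real K * (eps * real n ^ h)"
  shows "real (h * m) \<le> real (h*k + h*h*K + 1) * r * real n"
proof -
  have h0: "0 < h" using h1 by simp
  have r0: "0 \<le> r" using r e0 by (simp add: real_root_ge_zero)
  have rn: "r * real n = root h (eps * real n ^ h)"
    using r by (simp add: real_root_mult real_root_power_cancel h0)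
  consider "m = 0" | "1 \<le> m" "m < k" | "k \<le> m" by linarith
  then show ?thesis
  proof cases
    case 1 then show ?thesis using r0 by simp
  next
    case 2
    have "root h 1 \<le> root h (eps * real n ^ h)" using small[OF 2] h0 by simp
    then have "1 \<le> r * real n" using rn h0 by (simp add: real_root_one)
    moreover have "real (h*m) \<le> real (h*k + h*h*K + 1)"
    proof -
      have "h*m \<le> h*k" using 2 by simp
      then have "h*m \<le> h*k + h*h*K + 1" by linarith
      then show ?thesis by (simp only: of_nat_le_iff)
    qed
    moreover have "0 \<le> real (h*k + h*h*K + 1)" by simp
    ultimately have "real (h*m) \<le> real (h*k + h*h*K + 1) * (r * real n)"
      by (metis mult_left_mono mult.right_neutral order_trans)
    then show ?thesis by (simp add: mult.assoc)
  next
    case 3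
    have hm: "h \<le> m" using 3 hk by simp
    have "(real m / real h) ^ h \<le> real (m choose h)" using binomial_ge_n_over_k_pow_k[OF hm] by simp
    also have "\<dots> \<le> real K * (eps * real n ^ h)" using big[OF 3] .
    also have "\<dots> \<le> real K ^ h * (eps * real n ^ h)"
    proof (rule mult_right_mono)
      show "real K \<le> real K ^ h" using K1 h1 by (metis of_nat_1 of_nat_le_iff power_increasing power_one_right of_nat_power)
      show "0 \<le> eps * real n ^ h" using e0 by simp
    qed
    also have "\<dots> = (real K * r * real n) ^ h"
      using r e0 h0 by (simp add: power_mult_distrib)
    finally have "real m / real h \<le> real K * r * real n"
      using power_le_imp_le_base[of "real m / real h" "h - 1" "real K * r * real n"] h0 r0 by simp
    then have "real m \<le> real h * (real K * r * real n)" using h0 by (simp add: divide_le_eq mult.commute)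
    then have "real h * real m \<le> real h * (real h * (real K * r * real n))"
      by (simp add: mult_left_mono)
    also have "\<dots> = real (h*h*K) * (r * real n)" by simp
    also have "\<dots> \<le> real (h*k + h*h*K + 1) * (r * real n)"
      by (rule mult_right_mono) (use r0 in simp_all)
    finally show ?thesis by (simp add: mult.assoc)
  qed
qed

lemma main_h1:
  fixes V :: "'a set" and H :: "int \<Rightarrow> 'a set set" and h k :: nat
  assumes ch: "hypergraph_chain V H"
    and hel: "helly_number V H h"
    and col: "colorful_helly_number V H k"
    and hk: "k \<ge> h" and h1: "1 \<le> h"
    and fS: "finite S" and SV: "S \<subseteq> V" and a: "\<alpha> \<in> {0<..<1}"
    and cnt: "real (card (H l \<inter> subsets_of_size S h)) \<ge> \<alpha> * real (card S choose h)"
  shows "\<exists>S'. S' \<subseteq> S \<and> real (card S') \<ge> max 0 (1 - real (h*k + h*h*(k choose h) + 1) * root h (1 - \<alpha>)) * real (card S) \<and> S' \<in> H (l + 3)"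
proof -
  have Hmono: "H l \<subseteq> H (l+2)"
  proof -
    have "H l \<subseteq> H (l+1)" "H (l+1) \<subseteq> H (l+1+1)" using ch unfolding hypergraph_chain_def by blast+
    then show ?thesis by (simp add: add.assoc)
  qed
  define n where "n = card S"
  define eps where "eps = 1 - \<alpha>"
  define r where "r = root h eps"
  define K where "K = k choose h"
  define c where "c = real (h*k + h*h*K + 1)"
  have e0: "0 < eps" using a eps_def by simp
  define subs where "subs = subsets_of_size S h"
  have subs_eq: "subs = {T. T \<subseteq> S \<and> card T = h}"
    unfolding subs_def subsets_of_size_def using fS finite_subset by blast
  have fsubs: "finite subs" unfolding subs_eq using fS by simp
  have csubs: "card subs = n choose h" unfolding subs_eq n_def using n_subsets fS by blast
  define BadL where "BadL = subs - H l"
  have fB: "finite BadL" using fsubs BadL_def by simp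
  have "card BadL = card subs - card (H l \<inter> subs)"
  proof -
    have "BadL = subs - (H l \<inter> subs)" unfolding BadL_def by blast
    then show ?thesis using card_Diff_subset[of "H l \<inter> subs" subs] fsubs by (simp add: Int_lower2 finite_subset)
  qed
  moreover have "card (H l \<inter> subs) \<le> card subs" using fsubs by (simp add: card_mono)
  ultimately have "real (card BadL) = real (card subs) - real (card (H l \<inter> subs))" by simp
  then have cBL: "real (card BadL) \<le> eps * real (n choose h)"
    using cnt csubs unfolding subs_def eps_def n_def by (simp add: algebra_simps)
  have "n choose h \<le> n ^ h"
  proof (cases "h \<le> n")
    case True then show ?thesis using binomial_le_pow[OF True] by simp
  next
    case False
    then have "n < h" by simp
    then have "n choose h = 0" by (rule binomial_eq_0)
    then show ?thesis by (metis zero_le)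
  qed
  then have "real (n choose h) \<le> real n ^ h" by (metis of_nat_le_iff of_nat_power)
  then have cBL2: "real (card BadL) \<le> eps * real n ^ h" using cBL e0
    by (meson mult_left_mono less_imp_le order_trans)
  define bad where "bad = {T\<in>subs. T \<notin> H (l+2)}"
  define Fam where "Fam = {D. D \<subseteq> bad \<and> pdisj D}"
  have fFam: "finite Fam"
  proof -
    have "Fam \<subseteq> Pow bad" unfolding Fam_def by blast
    moreover have "finite bad" using fsubs bad_def by simp
    ultimately show ?thesis by (simp add: finite_subset)
  qed
  have "{} \<in> Fam" unfolding Fam_def pdisj_def by simp
  then have neF: "Fam \<noteq> {}" by blast
  define D where "D = (SOME D. D \<in> Fam \<and> card D = Max (card ` Fam))"
  have "\<exists>D. D \<in> Fam \<and> card D = Max (card ` Fam)"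
    using Max_in[of "card ` Fam"] fFam neF by fastforce
  then have DF: "D \<in> Fam" and Dmax: "card D = Max (card ` Fam)" unfolding D_def by (metis (mono_tags, lifting) someI_ex)+
  have Dbad: "D \<subseteq> bad" and pdD: "pdisj D" using DF Fam_def by auto
  have fD: "finite D" using Dbad fsubs bad_def finite_subset by (metis (no_types, lifting) mem_Collect_eq rev_finite_subset subsetI)
  have cover: "T \<inter> \<Union>D \<noteq> {}" if Tb: "T \<in> bad" for T
  proof
    assume dis: "T \<inter> \<Union>D = {}"
    have Tne: "T \<noteq> {}" using Tb h1 unfolding bad_def subs_eq by auto
    then have TD: "T \<notin> D" using dis by blast
    have "insert T D \<in> Fam" using Dbad Tb pdD dis TD unfolding Fam_def pdisj_def by blast
    then have "card (insert T D) \<le> card D" using Dmax fFam by simp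
    then show False using TD fD by simp
  qed
  define S' where "S' = S - \<Union>D"
  have S'H: "S' \<in> H (l + 3)"
  proof -
    have "subsets_of_size S' h \<subseteq> H (l+2)"
    proof
      fix T assume "T \<in> subsets_of_size S' h"
      then have T: "T \<subseteq> S'" "card T = h" unfolding subsets_of_size_def by auto
      then have "T \<in> subs" unfolding subs_eq S'_def by blast
      moreover have "T \<inter> \<Union>D = {}" using T S'_def by blast
      ultimately show "T \<in> H (l+2)" using cover unfolding bad_def by blast
    qed
    moreover have "S' \<subseteq> V" using SV S'_def by blast
    ultimately have "S' \<in> H (l+2+1)" using hel unfolding helly_number_def by blast
    then show ?thesis by (simp add: add.assoc)
  qed
  define m where "m = card D"
  have cardD: "\<forall>T\<in>D. card T = h \<and> T \<subseteq> S" using Dbad unfolding bad_def subs_eq by blast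
  have cU: "card (\<Union>D) \<le> h * m"
  proof -
    have "card (\<Union>D) \<le> (\<Sum>T\<in>D. card T)" by (rule card_Union_le_sum_card)
    also have "\<dots> = h * m" using cardD m_def by simp
    finally show ?thesis .
  qed
  have "card S \<le> card S' + card (\<Union>D)"
  proof -
    have "S \<subseteq> S' \<union> \<Union>D" unfolding S'_def by blast
    moreover have "finite (\<Union>D)" using cardD fS by (meson Union_least finite_subset)
    ultimately have "card S \<le> card (S' \<union> \<Union>D)" using fS S'_def
      by (intro card_mono) auto
    also have "\<dots> \<le> card S' + card (\<Union>D)" by (rule card_Un_le)
    finally show ?thesis .
  qed
  then have cS': "real n - real (h*m) \<le> real (card S')" using cU n_def by linarith
  have K1: "1 \<le> K" unfolding K_def using hk by (simp add: Suc_le_eq)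
  have small: "1 \<le> eps * real n ^ h" if "1 \<le> m" "m < k"
  proof -
    have "1 \<le> m" "m < k" using that by auto
    then have "D \<noteq> {}" using m_def by auto
    then obtain T where TD: "T \<in> D" by blast
    have "T \<in> subs" "T \<notin> H (l+2)" using TD Dbad unfolding bad_def by auto
    then have "T \<in> BadL" using Hmono unfolding BadL_def by blast
    then have "BadL \<noteq> {}" by blast
    then have "1 \<le> card BadL" using fB by (simp add: Suc_le_eq card_gt_0_iff)
    then have "1 \<le> real (card BadL)" by simp
    then have X: "1 \<le> eps * real n ^ h" using cBL2 by (rule order_trans)
    show "1 \<le> eps * real n ^ h" by (rule X)
  qed
  have big: "real (m choose h) \<le> real K * (eps * real n ^ h)" if km: "k \<le> m"
  proof -
    define Bad0 where "Bad0 = {G. G \<subseteq> \<Union>D \<and> card G = h \<and> finite G \<and> G \<notin> H l}"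
    have Dp: "\<forall>T\<in>D. finite T \<and> T \<subseteq> V \<and> T \<notin> H (l + 2) \<and> card T = h"
    proof
      fix T assume TD: "T \<in> D"
      then have "T \<subseteq> S" "card T = h" "T \<notin> H (l+2)" using Dbad cardD unfolding bad_def by auto
      moreover have "finite T" using \<open>T \<subseteq> S\<close> fS by (rule finite_subset)
      ultimately show "finite T \<and> T \<subseteq> V \<and> T \<notin> H (l + 2) \<and> card T = h" using SV by blast
    qed
    have cb: "(m choose k) \<le> card Bad0 * (m - h choose (k - h))"
      unfolding m_def Bad0_def by (rule count_bad[OF hel col pdD fD Dp])
    have "Bad0 \<subseteq> BadL" unfolding Bad0_def BadL_def subs_eq using cardD by blast
    then have b0: "card Bad0 \<le> card BadL" using fB by (simp add: card_mono)
    have cm: "(m choose k) * (k choose h) = (m choose h) * ((m - h) choose (k - h))"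
      using choose_mult[OF hk km] .
    have Qp: "0 < (m - h choose (k - h))" using km hk by (intro zero_less_binomial) linarith
    have "(m choose h) * (m - h choose (k - h)) \<le> (card BadL * K) * (m - h choose (k - h))"
    proof -
      have "(m choose h) * (m - h choose (k - h)) = (m choose k) * K" using cm K_def by (simp only:)
      also have "\<dots> \<le> card Bad0 * (m - h choose (k - h)) * K" using cb by (rule mult_le_mono1)
      also have "\<dots> \<le> card BadL * (m - h choose (k - h)) * K" using b0 by (intro mult_le_mono1)
      finally show ?thesis by (metis mult.commute mult.assoc)
    qed
    then have "m choose h \<le> card BadL * K" using Qp mult_le_cancel2 by blast
    then have "real (m choose h) \<le> real (card BadL) * real K" by (metis of_nat_le_iff of_nat_mult)
    also have "\<dots> \<le> (eps * real n ^ h) * real K" using cBL2 by (simp add: mult_right_mono)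
    finally show "real (m choose h) \<le> real K * (eps * real n ^ h)" by (simp add: mult.commute)
  qed
  have bound: "real (h * m) \<le> c * r * real n"
    unfolding c_def using arith_main[of h k K eps r m n, OF h1 hk K1 e0 r_def small big] by blast
  have "max 0 (1 - c * r) * real n \<le> real (card S')"
  proof (cases "1 - c * r \<le> 0")
    case True then show ?thesis by simp
  next
    case False
    then have "max 0 (1 - c * r) * real n = real n - c * r * real n" by (simp add: algebra_simps)
    then show ?thesis using bound cS' by linarith
  qed
  then show ?thesis using S'H unfolding S'_def c_def r_def eps_def K_def n_def by blast
qed


lemma chain_mono:
  assumes ch: "hypergraph_chain V H"
  shows "H l \<subseteq> H (l + int j)"
proof (induction j)
  case 0 then show ?case by simp
next
  case (Suc j)
  have "H (l + int j) \<subseteq> H (l + int j + 1)" using ch unfolding hypergraph_chain_def by blast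
  moreover have "l + int (Suc j) = l + int j + 1" by simp
  ultimately show ?case using Suc by (metis subset_trans)
qed

theorem theorem5:
  fixes V :: "'a set" and H :: "int \<Rightarrow> 'a set set" and h k :: nat
  assumes "hypergraph_chain V H"
    and "helly_number V H h"
    and "colorful_helly_number V H k"
    and "k \<ge> h"
  shows "\<exists>\<beta> :: real \<Rightarrow> real.
           (\<forall>\<alpha>\<in>{0<..<1}. \<beta> \<alpha> \<in> {0..<1}) \<and>
           (\<beta> \<longlongrightarrow> 1) (at_left 1) \<and>
           (\<forall>l S \<alpha>. finite S \<longrightarrow> S \<subseteq> V \<longrightarrow> \<alpha> \<in> {0<..<1} \<longrightarrow>
              real (card (H l \<inter> subsets_of_size S h)) \<ge> \<alpha> * real (card S choose h) \<longrightarrow>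
              (\<exists>S'. S' \<subseteq> S \<and> real (card S') \<ge> \<beta> \<alpha> * real (card S) \<and> S' \<in> H (l + 3)))"
proof (cases "h = 0")
  case True
  have main: "\<exists>S'. S' \<subseteq> S \<and> real (card S') \<ge> \<alpha> * real (card S) \<and> S' \<in> H (l + 3)"
    if fS: "finite S" and SV: "S \<subseteq> V" and a: "\<alpha> \<in> {0<..<1}"
      and cnt: "real (card (H l \<inter> subsets_of_size S h)) \<ge> \<alpha> * real (card S choose h)" for l S \<alpha>
  proof -
    have "0 < real (card (H l \<inter> subsets_of_size S h))" using cnt a True by simp
    then have "H l \<inter> subsets_of_size S h \<noteq> {}" by (metis card.empty less_irrefl of_nat_0)
    then obtain T where T: "T \<in> H l" "T \<subseteq> S" "card T = 0" "finite T"
      using True unfolding subsets_of_size_def by blast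
    then have "T = {}" by simp
    then have "{} \<in> H l" using T by simp
    moreover have "subsets_of_size S h = {{}}" using True unfolding subsets_of_size_def
      using fS finite_subset by fastforce
    ultimately have "subsets_of_size S h \<subseteq> H l" by simp
    then have "S \<in> H (l + 1)" using assms(2) SV unfolding helly_number_def by blast
    moreover have "H (l + 1) \<subseteq> H (l + 1 + int 2)" by (rule chain_mono[OF assms(1)])
    moreover have "l + 1 + int 2 = l + 3" by simp
    ultimately have "S \<in> H (l + 3)" by (metis subsetD)
    moreover have "\<alpha> * real (card S) \<le> real (card S)" using a mult_right_mono[of \<alpha> 1 "real (card S)"] by simp
    ultimately show ?thesis by blast
  qed
  show ?thesis
    apply (rule exI[of _ "\<lambda>\<alpha>. \<alpha>"])
    using main by (auto intro: tendsto_ident_at)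
next
  case False
  then have h1: "1 \<le> h" by simp
  define c where "c = real (h*k + h*h*(k choose h) + 1)"
  define \<beta> where "\<beta> = (\<lambda>\<alpha>::real. max 0 (1 - c * root h (1 - \<alpha>)))"
  have range: "\<beta> \<alpha> \<in> {0..<1}" if a: "\<alpha> \<in> {0<..<1}" for \<alpha>
  proof -
    have "0 < root h (1 - \<alpha>)" using a h1 by (intro real_root_gt_zero) auto
    moreover have "0 < c" unfolding c_def by (simp only: of_nat_0_less_iff)
    ultimately have "0 < c * root h (1 - \<alpha>)" by simp
    then show ?thesis unfolding \<beta>_def by simp
  qed
  have "(\<beta> \<longlongrightarrow> max 0 (1 - c * root h (1 - 1))) (at_left 1)"
    unfolding \<beta>_def by (intro tendsto_intros)
  then have lim: "(\<beta> \<longlongrightarrow> 1) (at_left 1)" by simp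
  show ?thesis
  proof (rule exI[of _ \<beta>], intro conjI)
    show "\<forall>\<alpha>\<in>{0<..<1}. \<beta> \<alpha> \<in> {0..<1}" using range by blast
    show "(\<beta> \<longlongrightarrow> 1) (at_left 1)" by (rule lim)
    show "\<forall>l S \<alpha>. finite S \<longrightarrow> S \<subseteq> V \<longrightarrow> \<alpha> \<in> {0<..<1} \<longrightarrow>
              real (card (H l \<inter> subsets_of_size S h)) \<ge> \<alpha> * real (card S choose h) \<longrightarrow>
              (\<exists>S'. S' \<subseteq> S \<and> real (card S') \<ge> \<beta> \<alpha> * real (card S) \<and> S' \<in> H (l + 3))"
      unfolding \<beta>_def c_def using main_h1[OF assms(1-4) h1] by blast
  qed
qed

end
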